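(* For every integer $n\geq 2$, the path $P_n$ on $n$ vertices satisfies $\operatorname{th}_{\operatorname{H}}(P_n)=\lceil 2\sqrt{n-1}\rceil$.
   Context: All graphs are finite, simple and undirected. Hopping color change rule: a blue vertex $v$ may force a white vertex $w$ to become blue if $v$ has not previously performed a force and every neighbor of $v$ is blue. For an initial blue set $B$, a chronological list of forces of $B$ is a sequence of such forces applied one at a time until no further force is possible; its underlying unordered set is a set of forces of $B$. $B$ is a hopping forcing set if some chronological list of forces of $B$ turns all vertices blue. For a set of forces $\mathcal F$ of $B$, let $\mathcal F^{(0)}=B$ and for $t\geq1$ let $\mathcal F^{(t)}$ be the set of vertices $w\notin U_{t-1}:=\bigcup_{i=0}^{t-1}\mathcal F^{(i)}$ for which there is $(v\to w)\in\mathcal F$ with $v\in U_{t-1}$ and all neighbors of $v$ in $U_{t-1}$. $\operatorname{pt}_{\operatorname{H}}(G;\mathcal F)$ is the least $t$ with $\bigcup_{i=0}^t\mathcal F^{(i)}=V(G)$ ($\infty$ if none); $\operatorname{pt}_{\operatorname{H}}(G;B)$ is the minimum of $\operatorname{pt}_{\operatorname{H}}(G;\mathcal F)$ over sets of forces $\mathcal F$ of $B$ ($\infty$ if $B$ is not a hopping forcing set). $\operatorname{th}_{\operatorname{H}}(G)=\min_{B\subseteq V(G)}\big(|B|+\operatorname{pt}_{\operatorname{H}}(G;B)\big)$. *)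

theory Defs
  imports Complex_Main "HOL-Library.Extended_Nat"
begin

text \<open>A finite simple graph is given by a vertex set V and a symmetric irreflexive
  adjacency relation E.  A force is a pair (v, w) meaning v forces w.\<close>

definition blue_after :: "'a set \<Rightarrow> ('a \<times> 'a) list \<Rightarrow> 'a set" where
  "blue_after B fs = B \<union> snd ` set fs"

definition can_hop_force ::
  "'a set \<Rightarrow> ('a \<Rightarrow> 'a \<Rightarrow> bool) \<Rightarrow> 'a set \<Rightarrow> ('a \<times> 'a) list \<Rightarrow> 'a \<Rightarrow> 'a \<Rightarrow> bool" where
  "can_hop_force V E B fs v w \<longleftrightarrow>
     v \<in> blue_after B fs \<and> w \<in> V \<and> w \<notin> blue_after B fs \<and> v \<notin> fst ` set fs \<and>
     (\<forall>u\<in>V. E v u \<longrightarrow> u \<in> blue_after B fs)"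

definition chrono_list ::
  "'a set \<Rightarrow> ('a \<Rightarrow> 'a \<Rightarrow> bool) \<Rightarrow> 'a set \<Rightarrow> ('a \<times> 'a) list \<Rightarrow> bool" where
  "chrono_list V E B fs \<longleftrightarrow>
     (\<forall>i<length fs. can_hop_force V E B (take i fs) (fst (fs ! i)) (snd (fs ! i))) \<and>
     \<not> (\<exists>v w. can_hop_force V E B fs v w)"

definition set_of_forces ::
  "'a set \<Rightarrow> ('a \<Rightarrow> 'a \<Rightarrow> bool) \<Rightarrow> 'a set \<Rightarrow> ('a \<times> 'a) set \<Rightarrow> bool" where
  "set_of_forces V E B F \<longleftrightarrow> (\<exists>fs. chrono_list V E B fs \<and> F = set fs)"

definition hopping_forcing_set :: "'a set \<Rightarrow> ('a \<Rightarrow> 'a \<Rightarrow> bool) \<Rightarrow> 'a set \<Rightarrow> bool" where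
  "hopping_forcing_set V E B \<longleftrightarrow> B \<subseteq> V \<and> (\<exists>fs. chrono_list V E B fs \<and> blue_after B fs = V)"

fun hop_rounds ::
  "'a set \<Rightarrow> ('a \<Rightarrow> 'a \<Rightarrow> bool) \<Rightarrow> 'a set \<Rightarrow> ('a \<times> 'a) set \<Rightarrow> nat \<Rightarrow> 'a set" where
  "hop_rounds V E B F 0 = B"
| "hop_rounds V E B F (Suc t) =
     hop_rounds V E B F t \<union>
     {w. w \<notin> hop_rounds V E B F t \<and>
         (\<exists>v. (v, w) \<in> F \<and> v \<in> hop_rounds V E B F t \<and>
              (\<forall>u\<in>V. E v u \<longrightarrow> u \<in> hop_rounds V E B F t))}"

definition pt_H_forces ::
  "'a set \<Rightarrow> ('a \<Rightarrow> 'a \<Rightarrow> bool) \<Rightarrow> 'a set \<Rightarrow> ('a \<times> 'a) set \<Rightarrow> enat" where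
  "pt_H_forces V E B F =
     (if \<exists>t. hop_rounds V E B F t = V then enat (LEAST t. hop_rounds V E B F t = V) else \<infinity>)"

definition pt_H :: "'a set \<Rightarrow> ('a \<Rightarrow> 'a \<Rightarrow> bool) \<Rightarrow> 'a set \<Rightarrow> enat" where
  "pt_H V E B =
     (if hopping_forcing_set V E B
      then Inf {pt_H_forces V E B F | F. set_of_forces V E B F}
      else \<infinity>)"

definition th_H :: "'a set \<Rightarrow> ('a \<Rightarrow> 'a \<Rightarrow> bool) \<Rightarrow> enat" where
  "th_H V E = Inf {enat (card B) + pt_H V E B | B. B \<subseteq> V}"

definition path_vertices :: "nat \<Rightarrow> nat set" where
  "path_vertices n = {0..<n}"

definition path_edge :: "nat \<Rightarrow> nat \<Rightarrow> bool" where
  "path_edge u v \<longleftrightarrow> u + 1 = v \<or> v + 1 = u"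

end

theory Submission
  imports Defs
begin

section \<open>Chronological lists\<close>

lemma chrono_snd:
  assumes "chrono_list V E B fs" "(v,w) \<in> set fs"
  shows "w \<in> V \<and> w \<notin> B"
proof -
  obtain i where i: "i < length fs" "fs ! i = (v,w)" using assms(2) by (metis in_set_conv_nth)
  have "can_hop_force V E B (take i fs) v w" using assms(1) i unfolding chrono_list_def by (metis fst_conv snd_conv)
  thus ?thesis unfolding can_hop_force_def blue_after_def by auto
qed

lemma chrono_fun:
  assumes "chrono_list V E B fs" "(v,w) \<in> set fs" "(v,w') \<in> set fs"
  shows "w = w'"
proof -
  obtain i where i: "i < length fs" "fs ! i = (v,w)" using assms(2) by (metis in_set_conv_nth)
  obtain j where j: "j < length fs" "fs ! j = (v,w')" using assms(3) by (metis in_set_conv_nth)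
  have ci: "can_hop_force V E B (take i fs) v w" using assms(1) i unfolding chrono_list_def by (metis fst_conv snd_conv)
  have cj: "can_hop_force V E B (take j fs) v w'" using assms(1) j unfolding chrono_list_def by (metis fst_conv snd_conv)
  show ?thesis
  proof (cases "i < j")
    case True
    hence "(v,w) \<in> set (take j fs)" using i j by (metis in_set_conv_nth length_take min.absorb4 nth_take)
    hence "v \<in> fst ` set (take j fs)" by force
    thus ?thesis using cj unfolding can_hop_force_def by auto
  next
    case False
    show ?thesis
    proof (cases "j < i")
      case True
      hence "(v,w') \<in> set (take i fs)" using i j by (metis in_set_conv_nth length_take min.absorb4 nth_take)
      hence "v \<in> fst ` set (take i fs)" by force
      thus ?thesis using ci unfolding can_hop_force_def by auto
    next
      case False
      hence "i = j" using \<open>\<not> i < j\<close> by simp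
      thus ?thesis using i j by simp
    qed
  qed
qed

section \<open>Rounds\<close>

definition full :: "'a set \<Rightarrow> ('a \<Rightarrow> 'a \<Rightarrow> bool) \<Rightarrow> 'a set \<Rightarrow> 'a set" where
  "full V E U = {v\<in>U. \<forall>u\<in>V. E v u \<longrightarrow> u \<in> U}"

lemma full_mono: "U \<subseteq> U' \<Longrightarrow> full V E U \<subseteq> full V E U'"
  unfolding full_def by auto

lemma hop_mono_Suc: "hop_rounds V E B F s \<subseteq> hop_rounds V E B F (Suc s)"
  by auto

lemma hop_mono: "r \<le> s \<Longrightarrow> hop_rounds V E B F r \<subseteq> hop_rounds V E B F s"
  by (induction s) (auto simp: le_Suc_eq)

lemma hop_sub:
  assumes "B \<subseteq> V" "\<And>v w. (v,w) \<in> F \<Longrightarrow> w \<in> V"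
  shows "hop_rounds V E B F s \<subseteq> V"
  using assms by (induction s) auto

lemma hop_forcer:
  "w \<in> hop_rounds V E B F (Suc s) - B \<Longrightarrow> \<exists>v. (v,w) \<in> F \<and> v \<in> full V E (hop_rounds V E B F s)"
proof (induction s arbitrary: w)
  case 0
  thus ?case unfolding full_def by auto
next
  case (Suc s)
  show ?case
  proof (cases "w \<in> hop_rounds V E B F (Suc s)")
    case True
    then obtain v where "(v,w) \<in> F" "v \<in> full V E (hop_rounds V E B F s)" using Suc by auto
    moreover have "full V E (hop_rounds V E B F s) \<subseteq> full V E (hop_rounds V E B F (Suc s))"
      by (rule full_mono) auto
    ultimately show ?thesis by auto
  next
    case False
    thus ?thesis using Suc.prems unfolding full_def
      by (simp only: hop_rounds.simps(2)[of V E B F "Suc s"]) blast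
  qed
qed

lemma hop_card:
  assumes "finite V" "B \<subseteq> V" "\<And>v w. (v,w) \<in> F \<Longrightarrow> w \<in> V"
    "\<And>v w w'. (v,w) \<in> F \<Longrightarrow> (v,w') \<in> F \<Longrightarrow> w = w'"
  shows "card (hop_rounds V E B F (Suc s)) \<le> card (full V E (hop_rounds V E B F s)) + card B"
proof -
  let ?U = "hop_rounds V E B F"
  define g where "g v = (THE w. (v,w) \<in> F)" for v
  have g: "(v,w) \<in> F \<Longrightarrow> g v = w" for v w unfolding g_def using assms(4) by blast
  have "?U s \<subseteq> V" using assms(2,3) by (rule hop_sub)
  hence fU: "finite (?U s)" using assms(1) finite_subset by blast
  have ff: "finite (full V E (?U s))" using fU unfolding full_def by auto
  have sub: "?U (Suc s) - B \<subseteq> g ` full V E (?U s)"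
  proof
    fix w assume "w \<in> ?U (Suc s) - B"
    then obtain v where "(v,w) \<in> F" "v \<in> full V E (?U s)" using hop_forcer by metis
    thus "w \<in> g ` full V E (?U s)" using g by force
  qed
  have "card (?U (Suc s) - B) \<le> card (g ` full V E (?U s))"
    by (rule card_mono[OF finite_imageI[OF ff] sub])
  also have "\<dots> \<le> card (full V E (?U s))" by (rule card_image_le[OF ff])
  finally have c1: "card (?U (Suc s) - B) \<le> card (full V E (?U s))" .
  have "?U (Suc s) \<subseteq> V" using assms(2,3) by (rule hop_sub)
  hence fU2: "finite (?U (Suc s))" using assms(1) finite_subset by blast
  have "card (?U (Suc s)) \<le> card ((?U (Suc s) - B) \<union> B)"
    by (rule card_mono) (use fU2 assms(1,2) finite_subset in auto)
  also have "\<dots> \<le> card (?U (Suc s) - B) + card B" by (rule card_Un_le)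
  finally have "card (?U (Suc s)) \<le> card (?U (Suc s) - B) + card B" .
  with c1
  show ?thesis by linarith
qed

lemma path_boundary:
  assumes "U \<subseteq> {0..<n}" "U \<noteq> {0..<n}" "U \<noteq> {}"
  shows "\<exists>z\<in>U. z \<notin> full {0..<n} path_edge U"
proof -
  obtain a where a: "a \<in> U" using assms(3) by auto
  have "\<not> {0..<n} \<subseteq> U" using assms(1,2) by blast
  then obtain c where c: "c < n" "c \<notin> U" by (meson atLeastLessThan_iff subsetI)
  have "a \<noteq> c" using a c by auto
  show ?thesis
  proof (cases "a < c")
    case True
    define m where "m = (LEAST z. a < z \<and> z < n \<and> z \<notin> U)"
    have m: "a < m \<and> m < n \<and> m \<notin> U" unfolding m_def
      by (rule LeastI[of _ c]) (use True c in auto)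
    have "m - 1 \<in> U"
    proof (cases "m - 1 = a")
      case True thus ?thesis using a by simp
    next
      case False
      hence "m - 1 < m" "a < m - 1" using m by auto
      hence "\<not> (a < m - 1 \<and> m - 1 < n \<and> m - 1 \<notin> U)"
        using not_less_Least[of "m - 1" "\<lambda>z. a < z \<and> z < n \<and> z \<notin> U"] unfolding m_def by blast
      thus ?thesis using \<open>a < m - 1\<close> m by auto
    qed
    moreover have "path_edge (m - 1) m" unfolding path_edge_def using m by auto
    ultimately have "m - 1 \<notin> full {0..<n} path_edge U" using m unfolding full_def by auto
    thus ?thesis using \<open>m - 1 \<in> U\<close> by blast
  next
    case False
    hence ca: "c < a" using \<open>a \<noteq> c\<close> by simp
    define m where "m = (LEAST z. c < z \<and> z \<in> U)"
    have m: "c < m \<and> m \<in> U" unfolding m_def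
      by (rule LeastI[of _ a]) (use ca a in auto)
    have "m - 1 \<notin> U"
    proof (cases "m - 1 = c")
      case True thus ?thesis using c by simp
    next
      case False
      hence "m - 1 < m" "c < m - 1" using m by auto
      hence "\<not> (c < m - 1 \<and> m - 1 \<in> U)"
        using not_less_Least[of "m - 1" "\<lambda>z. c < z \<and> z \<in> U"] unfolding m_def by blast
      thus ?thesis using \<open>c < m - 1\<close> by auto
    qed
    moreover have "path_edge m (m - 1)" unfolding path_edge_def using m by auto
    moreover have "m - 1 < n" using m assms(1) by auto
    ultimately have "m \<notin> full {0..<n} path_edge U" unfolding full_def by auto
    thus ?thesis using m by blast
  qed
qed

lemma lower_F:
  assumes n: "n \<ge> 1" and BV: "B \<subseteq> {0..<n}"
    and F: "set_of_forces {0..<n} path_edge B F"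
    and t: "hop_rounds {0..<n} path_edge B F t = {0..<n}"
    and lt: "\<forall>s<t. hop_rounds {0..<n} path_edge B F s \<noteq> {0..<n}"
  shows "n + t \<le> card B * (t + 1)"
proof -
  let ?V = "{0..<n::nat}"
  let ?U = "hop_rounds ?V path_edge B F"
  obtain fs where fs: "chrono_list ?V path_edge B fs" "F = set fs" using F unfolding set_of_forces_def by auto
  have sndV: "\<And>v w. (v,w) \<in> F \<Longrightarrow> w \<in> ?V" using chrono_snd[OF fs(1)] fs(2) by blast
  have funF: "\<And>v w w'. (v,w) \<in> F \<Longrightarrow> (v,w') \<in> F \<Longrightarrow> w = w'"
    using chrono_fun[OF fs(1)] fs(2) by blast
  have sub: "?U s \<subseteq> ?V" for s using BV sndV by (rule hop_sub)
  have fin: "finite (?U s)" for s using sub finite_subset by blast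
  have cardS: "card (?U (Suc s)) \<le> card (full ?V path_edge (?U s)) + card B" for s
    by (rule hop_card) (use BV sndV funF in auto)
  show ?thesis
  proof (cases "card B = 0")
    case True
    have "finite B" using BV finite_subset by blast
    hence B0: "B = {}" using True by simp
    have U0: "?U s = {}" for s
    proof (induction s)
      case 0 thus ?case using B0 by simp
    next
      case (Suc s)
      have "full ?V path_edge (?U s) = {}" using Suc unfolding full_def by auto
      hence "card (?U (Suc s)) = 0" using cardS[of s] True by simp
      thus ?case using card_0_eq[OF fin[of "Suc s"]] by blast
    qed
    have "0 \<in> ?V" using n by simp
    hence False using t U0[of t] by simp
    thus ?thesis ..
  next
    case False
    have "s \<le> t \<Longrightarrow> card (?U s) + s \<le> card B * (s + 1)" for s
    proof (induction s)
      case 0 thus ?case by simp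
    next
      case (Suc s)
      hence st: "s < t" by simp
      have ne: "?U s \<noteq> ?V" using lt st by auto
      have "B \<subseteq> ?U s" using hop_mono[of 0 s ?V path_edge B F] by simp
      hence "?U s \<noteq> {}" using False by auto
      then obtain z where z: "z \<in> ?U s" "z \<notin> full ?V path_edge (?U s)"
        using path_boundary[OF sub ne] by blast
      have "full ?V path_edge (?U s) \<subset> ?U s" using z unfolding full_def by auto
      hence "card (full ?V path_edge (?U s)) < card (?U s)" using fin psubset_card_mono by blast
      thus ?case using cardS[of s] Suc st by simp
    qed
    from this[of t] show ?thesis using t by simp
  qed
qed


section \<open>Construction\<close>

lemma construction:
  assumes b: "2 \<le> b" "b \<le> n" and nt: "n \<le> b + t * (b - 1)"
  shows "th_H (path_vertices n) path_edge \<le> enat (b + t)"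
proof -
  let ?V = "{0..<n::nat}"
  let ?B = "{0..<b}"
  define fs where "fs = map (\<lambda>v. (v, v + b)) [0..<n - b]"
  have tk: "i \<le> n - b \<Longrightarrow> take i fs = map (\<lambda>v. (v, v + b)) [0..<i]" for i
    unfolding fs_def by (simp add: take_map)
  have ba: "i \<le> n - b \<Longrightarrow> blue_after ?B (take i fs) = {0..<b + i}" for i
  proof -
    assume "i \<le> n - b"
    hence "set (take i fs) = (\<lambda>v. (v, v + b)) ` {0..<i}" using tk[of i] by (simp only: set_map set_upt)
    hence "snd ` set (take i fs) = (\<lambda>v. v + b) ` {0..<i}" by (simp add: image_image)
    also have "\<dots> = {b..<i + b}" by simp
    finally have "snd ` set (take i fs) = {b..<i + b}" .
    moreover have "{0..<b} \<union> {b..<i + b} = {0..<b + i}" by auto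
    ultimately show ?thesis unfolding blue_after_def by simp
  qed
  have chr: "chrono_list ?V path_edge ?B fs"
    unfolding chrono_list_def
  proof (intro conjI allI impI)
    fix i assume i: "i < length fs"
    have "length fs = n - b" unfolding fs_def by simp
    hence i': "i < n - b" using i by simp
    have fi: "fs ! i = (i, i + b)" unfolding fs_def using i' by simp
    have "set (take i fs) = (\<lambda>v. (v, v + b)) ` {0..<i}" using tk[of i] i' by (simp only: set_map set_upt)
    hence "fst ` set (take i fs) = {0..<i}" by (simp add: image_image)
    thus "can_hop_force ?V path_edge ?B (take i fs) (fst (fs ! i)) (snd (fs ! i))"
      unfolding can_hop_force_def fi using ba[of i] i' b unfolding path_edge_def by auto
  next
    have lfs: "length fs = n - b" unfolding fs_def by simp
    have "blue_after ?B (take (n - b) fs) = {0..<b + (n - b)}" by (rule ba) simp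
    hence "blue_after ?B fs = ?V" using lfs b by simp
    thus "\<not> (\<exists>v w. can_hop_force ?V path_edge ?B fs v w)" unfolding can_hop_force_def by auto
  qed
  have lfs: "length fs = n - b" unfolding fs_def by simp
  have "blue_after ?B (take (n - b) fs) = {0..<b + (n - b)}" by (rule ba) simp
  hence bfs: "blue_after ?B fs = ?V" using lfs b by simp
  have hfs: "hopping_forcing_set ?V path_edge ?B"
    unfolding hopping_forcing_set_def using chr bfs b by auto
  let ?F = "set fs"
  have sof: "set_of_forces ?V path_edge ?B ?F" unfolding set_of_forces_def using chr by auto
  have Fmem: "v + b < n \<Longrightarrow> (v, v + b) \<in> ?F" for v unfolding fs_def by auto
  let ?U = "hop_rounds ?V path_edge ?B ?F"
  have sup: "{0..<min n (b + s * (b - 1))} \<subseteq> ?U s" for s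
  proof (induction s)
    case 0 thus ?case by auto
  next
    case (Suc s)
    show ?case
    proof
      fix w assume w: "w \<in> {0..<min n (b + Suc s * (b - 1))}"
      show "w \<in> ?U (Suc s)"
      proof (cases "w \<in> ?U s")
        case True thus ?thesis by simp
      next
        case False
        let ?L = "min n (b + s * (b - 1))"
        have wL: "?L \<le> w"
        proof (rule ccontr)
          assume "\<not> ?L \<le> w"
          hence "w < ?L" by (simp only: not_le)
          hence "w \<in> {0..<?L}" by (simp only: atLeastLessThan_iff le0 simp_thms)
          with Suc.IH False show False by blast
        qed
        hence wn: "w < n" "b \<le> w" using w b by auto
        have L: "?L = b + s * (b - 1)" using wL wn w by auto
        have w2: "w < b + s * (b - 1) + (b - 1)" using w by simp
        define v where "v = w - b"
        have vw: "(v, w) \<in> ?F" using Fmem[of v] wn unfolding v_def by simp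
        have "v < ?L" using w2 L wn b unfolding v_def by linarith
        hence "v \<in> {0..<?L}" by simp
        hence vU: "v \<in> ?U s" using Suc.IH by blast
        have "\<forall>u\<in>?V. path_edge v u \<longrightarrow> u \<in> ?U s"
        proof (intro ballI impI)
          fix u assume "u \<in> ?V" "path_edge v u"
          hence "u < ?L" using L w2 wn b unfolding path_edge_def v_def by auto
          thus "u \<in> ?U s" using Suc.IH by auto
        qed
        thus ?thesis using False vw vU by auto
      qed
    qed
  qed
  have Fsub: "\<And>v w. (v,w) \<in> ?F \<Longrightarrow> w \<in> ?V" unfolding fs_def by auto
  have "?U t \<subseteq> ?V" using _ Fsub by (rule hop_sub) (use b in auto)
  moreover have "?V \<subseteq> ?U t" using sup[of t] nt by auto
  ultimately have Ut: "?U t = ?V" by blast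
  have "pt_H_forces ?V path_edge ?B ?F \<le> enat t"
    unfolding pt_H_forces_def using Ut by (auto intro: Least_le)
  moreover have "pt_H ?V path_edge ?B \<le> pt_H_forces ?V path_edge ?B ?F"
    unfolding pt_H_def using hfs sof by (auto intro: Inf_lower)
  ultimately have pt: "pt_H ?V path_edge ?B \<le> enat t" by simp
  have "th_H ?V path_edge \<le> enat (card ?B) + pt_H ?V path_edge ?B"
    unfolding th_H_def
  proof (rule Inf_lower, rule CollectI, intro exI conjI)
    show "enat (card ?B) + pt_H ?V path_edge ?B = enat (card ?B) + pt_H ?V path_edge ?B" ..
    show "?B \<subseteq> ?V" using b by auto
  qed
  also have "\<dots> \<le> enat b + enat t" using add_left_mono[OF pt, of "enat b"] by simp
  finally show ?thesis unfolding path_vertices_def by simp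
qed


section \<open>Arithmetic\<close>

lemma sqrt_bound:
  assumes "n \<ge> 2"
  shows "2 * sqrt (real (n - 1)) = sqrt (4 * real (n - 1))"
  by (simp add: real_sqrt_mult)

lemma aux_lin:
  fixes Q P T R N :: int
  shows "Q - 4*(P - T - 1) = R \<Longrightarrow> 0 \<le> R \<Longrightarrow> N + T \<le> P \<Longrightarrow> 4*(N-1) \<le> Q"
  by presburger

lemma arith_lower:
  assumes n: "n \<ge> 2" and h: "n + t \<le> b * (t + 1)"
  shows "nat \<lceil>2 * sqrt (real (n - 1))\<rceil> \<le> b + t"
proof -
  have "int (n + t) \<le> int (b * (t + 1))" using h by (simp only: of_nat_le_iff)
  hence i: "int n + int t \<le> int b * (int t + 1)" by (simp only: of_nat_add of_nat_mult of_nat_1)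
  have id: "(int b + int t)^2 - 4*(int b*(int t+1) - int t - 1) = (int b - int t - 2)^2"
    by (simp add: algebra_simps power2_eq_square)
  have "0 \<le> (int b - int t - 2)^2" by simp
  have ii: "4 * (int n - 1) \<le> (int b + int t)^2" by (rule aux_lin[OF id \<open>0 \<le> _\<close> i])
  have le: "real_of_int (4 * (int n - 1)) \<le> real_of_int ((int b + int t)^2)" using ii by (simp only: of_int_le_iff)
  have e1: "real_of_int (4 * (int n - 1)) = 4 * real (n - 1)" using n by (simp add: of_nat_diff)
  have e2: "real_of_int ((int b + int t)^2) = (real (b + t))^2" by simp
  from le have r: "4 * real (n - 1) \<le> (real (b + t))^2" unfolding e1 e2 .
  have "2 * sqrt (real (n - 1)) = sqrt (4 * real (n - 1))" using n by (rule sqrt_bound)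
  also have "\<dots> \<le> sqrt ((real (b + t))^2)" using r by (rule real_sqrt_le_mono)
  also have "\<dots> = real (b + t)" by simp
  finally have "2 * sqrt (real (n - 1)) \<le> of_int (int (b + t))" by simp
  hence "\<lceil>2 * sqrt (real (n - 1))\<rceil> \<le> int (b + t)" by (simp only: ceiling_le_iff)
  thus ?thesis by (simp only: nat_le_iff)
qed

lemma arith_upper:
  assumes n: "n \<ge> 2"
  defines "k \<equiv> nat \<lceil>2 * sqrt (real (n - 1))\<rceil>"
  shows "k \<ge> 2 \<and> n - 1 \<le> (k div 2) * (k - k div 2)"
proof -
  have "1 \<le> real (n - 1)" using n by simp
  hence "1 \<le> sqrt (real (n - 1))" by simp
  hence "2 \<le> 2 * sqrt (real (n - 1))" by simp
  also have "\<dots> \<le> of_int \<lceil>2 * sqrt (real (n - 1))\<rceil>" by simp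
  finally have c2: "2 \<le> \<lceil>2 * sqrt (real (n - 1))\<rceil>" by simp
  hence kk: "real k = of_int \<lceil>2 * sqrt (real (n - 1))\<rceil>" unfolding k_def by simp
  have k2: "k \<ge> 2" using c2 unfolding k_def by linarith
  have "2 * sqrt (real (n - 1)) \<le> real k" using kk by simp
  hence "(2 * sqrt (real (n - 1)))^2 \<le> (real k)^2" by (rule power_mono) simp
  hence "4 * real (n - 1) \<le> real (k^2)" by (simp add: power_mult_distrib)
  hence "real (4 * (n - 1)) \<le> real (k^2)" by simp
  hence q: "4 * (n - 1) \<le> k^2" by (simp only: of_nat_le_iff)
  define x where "x = k div 2"
  have "k = 2 * x \<or> k = 2 * x + 1" unfolding x_def by presburger
  hence "n - 1 \<le> x * (k - x)"
  proof
    assume kx: "k = 2 * x"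
    hence "k^2 = 4 * (x * (k - x))" by (simp add: power2_eq_square)
    thus ?thesis using q by linarith
  next
    assume kx: "k = 2 * x + 1"
    hence "k^2 = 4 * (x * (k - x)) + 1" by (simp add: power2_eq_square algebra_simps)
    thus ?thesis using q by linarith
  qed
  thus ?thesis using k2 unfolding x_def by simp
qed

lemma pt_attained:
  "pt_H V E B = \<infinity> \<or> (\<exists>F. set_of_forces V E B F \<and> pt_H V E B = pt_H_forces V E B F)"
proof (cases "hopping_forcing_set V E B")
  case True
  let ?S = "{pt_H_forces V E B F | F. set_of_forces V E B F}"
  show ?thesis
  proof (cases "?S = {}")
    case True thus ?thesis unfolding pt_H_def Inf_enat_def by simp
  next
    case False
    then obtain y where "y \<in> ?S" by blast
    hence "(LEAST x. x \<in> ?S) \<in> ?S" by (rule LeastI)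
    hence "Inf ?S \<in> ?S" unfolding Inf_enat_def using False by simp
    thus ?thesis unfolding pt_H_def using True by auto
  qed
next
  case False thus ?thesis unfolding pt_H_def by simp
qed

theorem proposition3p5:
  fixes n :: nat
  assumes "n \<ge> 2"
  shows "th_H (path_vertices n) path_edge = enat (nat \<lceil>2 * sqrt (real (n - 1))\<rceil>)"
proof (rule antisym)
  define k where "k = nat \<lceil>2 * sqrt (real (n - 1))\<rceil>"
  have au: "k \<ge> 2 \<and> n - 1 \<le> (k div 2) * (k - k div 2)" unfolding k_def using assms by (rule arith_upper)
  define x where "x = k div 2"
  define y where "y = k - x"
  have x1: "x \<ge> 1" "y \<ge> 1" "x + y = k" "n - 1 \<le> x * y" using au unfolding x_def y_def by auto
  show "th_H (path_vertices n) path_edge \<le> enat k"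
  proof (cases "x + 1 \<le> n")
    case True
    have "n \<le> (x + 1) + (y - 1) * (x + 1 - 1)"
    proof -
      have "(y - 1) * x + x = x * y" using x1 by (cases y) (auto simp: algebra_simps)
      moreover have "x + 1 - 1 = x" by simp
      ultimately show ?thesis using x1 assms by (simp only:)
    qed
    hence "th_H (path_vertices n) path_edge \<le> enat ((x + 1) + (y - 1))"
      using True x1 by (intro construction) auto
    thus ?thesis using x1 by simp
  next
    case False
    have t1: "th_H (path_vertices n) path_edge \<le> enat (n + 0)"
      using assms by (intro construction) auto
    have "n \<le> k" using False x1 unfolding x_def by linarith
    hence t2: "enat (n + 0) \<le> enat k" by simp
    show ?thesis using order_trans[OF t1 t2] .
  qed
next
  define k where "k = nat \<lceil>2 * sqrt (real (n - 1))\<rceil>"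
  let ?V = "{0..<n::nat}"
  show "enat k \<le> th_H (path_vertices n) path_edge"
    unfolding th_H_def path_vertices_def
  proof (rule Inf_greatest)
    fix z assume "z \<in> {enat (card B) + pt_H ?V path_edge B | B. B \<subseteq> ?V}"
    then obtain B where B: "B \<subseteq> ?V" "z = enat (card B) + pt_H ?V path_edge B" by blast
    from pt_attained[of ?V path_edge B] show "enat k \<le> z"
    proof
      assume "pt_H ?V path_edge B = \<infinity>"
      thus ?thesis using B by simp
    next
      assume "\<exists>F. set_of_forces ?V path_edge B F \<and> pt_H ?V path_edge B = pt_H_forces ?V path_edge B F"
      then obtain F where F: "set_of_forces ?V path_edge B F" "pt_H ?V path_edge B = pt_H_forces ?V path_edge B F" by blast
      show ?thesis
      proof (cases "\<exists>t. hop_rounds ?V path_edge B F t = ?V")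
        case False
        hence "pt_H ?V path_edge B = \<infinity>" using F(2) unfolding pt_H_forces_def by simp
        thus ?thesis using B by simp
      next
        case True
        define t where "t = (LEAST t. hop_rounds ?V path_edge B F t = ?V)"
        have pt: "pt_H ?V path_edge B = enat t" using F(2) True unfolding pt_H_forces_def t_def by simp
        have Ut: "hop_rounds ?V path_edge B F t = ?V" using True unfolding t_def by (rule LeastI_ex)
        have lt: "\<forall>s<t. hop_rounds ?V path_edge B F s \<noteq> ?V" unfolding t_def using not_less_Least by blast
        have "n + t \<le> card B * (t + 1)" using assms B(1) F(1) Ut lt by (intro lower_F) auto
        hence "k \<le> card B + t" unfolding k_def using assms arith_lower by blast
        thus ?thesis using B pt by simp
      qed
    qed
  qed
qed

end
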